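(* Let $X=[0,\infty)\subset\mathbb{R}$ and $\mathcal{A}=\{\alpha_1,\dots,\alpha_m\}\subset\mathbb{R}$ with $\alpha_1<\cdots<\alpha_m$; identify $\mathbb{R}^{\mathcal{A}}$ with $\mathbb{R}^m$ (index $i$ for $\alpha_i$), with standard basis $\delta_1,\dots,\delta_m$. Then the normalized $X$-circuits of $\mathcal{A}$ are exactly the vectors of the following two types: (1) $\lambda=\delta_k-\delta_j$ with $1\le j<k\le m$; (2) for $1\le i<j<k\le m$, \[\lambda=\frac{\alpha_j-\alpha_i}{\alpha_k-\alpha_i}\,\delta_k+\frac{\alpha_k-\alpha_j}{\alpha_k-\alpha_i}\,\delta_i-\delta_j.\]
   Context: For a nonempty closed convex $X\subset\mathbb{R}^n$ and nonempty finite $\mathcal{A}\subset\mathbb{R}^n$: $\mathcal{A}\nu=\sum_\alpha\alpha\nu_\alpha$ for $\nu\in\mathbb{R}^{\mathcal{A}}$; $\sigma_X(y)=\sup\{y^Tx:x\in X\}\in\mathbb{R}\cup\{+\infty\}$; for $\beta\in\mathcal{A}$, $N_\beta=\{\nu\in\mathbb{R}^{\mathcal{A}}:\nu_\alpha\ge0\ \forall\alpha\neq\beta,\ \sum_\alpha\nu_\alpha=0\}$. A vector $\nu^\star\in N_\beta$ is an $X$-circuit of $\mathcal{A}$ if (1) $\nu^\star\neq0$, (2) $\sigma_X(-\mathcal{A}\nu^\star)<\infty$, and (3) $\nu^\star$ cannot be written as a convex combination of two non-proportional vectors $\nu^{(1)},\nu^{(2)}\in N_\beta$ such that the map $\nu\mapsto\sigma_X(-\mathcal{A}\nu)$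 is affine on the segment $[\nu^{(1)},\nu^{(2)}]$. An $X$-circuit is normalized if its unique negative entry equals $-1$. *)

theory Defs
  imports "HOL-Analysis.Analysis"
begin

text \<open>Vectors in R^A are represented as functions nu :: 'a => real that vanish outside A.\<close>

definition lin_comb :: "'a::euclidean_space set \<Rightarrow> ('a \<Rightarrow> real) \<Rightarrow> 'a" where
  "lin_comb A \<nu> = (\<Sum>\<alpha>\<in>A. \<nu> \<alpha> *\<^sub>R \<alpha>)"

definition support_fn :: "'a::euclidean_space set \<Rightarrow> 'a \<Rightarrow> ereal" where
  "support_fn X y = (SUP x\<in>X. ereal (inner y x))"

definition Ncone :: "'a set \<Rightarrow> 'a \<Rightarrow> ('a \<Rightarrow> real) set" where
  "Ncone A \<beta> = {\<nu>. (\<forall>\<alpha>. \<alpha> \<notin> A \<longrightarrow> \<nu> \<alpha> = 0) \<and> (\<forall>\<alpha>\<in>A. \<alpha> \<noteq> \<beta> \<longrightarrow> \<nu> \<alpha> \<ge> 0)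
                  \<and> (\<Sum>\<alpha>\<in>A. \<nu> \<alpha>) = 0}"

definition seg_pt :: "('a \<Rightarrow> real) \<Rightarrow> ('a \<Rightarrow> real) \<Rightarrow> real \<Rightarrow> 'a \<Rightarrow> real" where
  "seg_pt \<nu>1 \<nu>2 t = (\<lambda>\<alpha>. (1 - t) * \<nu>1 \<alpha> + t * \<nu>2 \<alpha>)"

definition affine_on_seg :: "'a::euclidean_space set \<Rightarrow> 'a set \<Rightarrow> ('a \<Rightarrow> real) \<Rightarrow> ('a \<Rightarrow> real) \<Rightarrow> bool" where
  "affine_on_seg X A \<nu>1 \<nu>2 \<longleftrightarrow>
     (\<exists>a b::real. \<forall>t\<in>{0..1}. support_fn X (- lin_comb A (seg_pt \<nu>1 \<nu>2 t)) = ereal (a + b * t))"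

definition proportional :: "('a \<Rightarrow> real) \<Rightarrow> ('a \<Rightarrow> real) \<Rightarrow> bool" where
  "proportional \<nu>1 \<nu>2 \<longleftrightarrow> (\<exists>c. \<nu>1 = (\<lambda>\<alpha>. c * \<nu>2 \<alpha>)) \<or> (\<exists>c. \<nu>2 = (\<lambda>\<alpha>. c * \<nu>1 \<alpha>))"

definition X_circuit_at :: "'a::euclidean_space set \<Rightarrow> 'a set \<Rightarrow> 'a \<Rightarrow> ('a \<Rightarrow> real) \<Rightarrow> bool" where
  "X_circuit_at X A \<beta> \<nu> \<longleftrightarrow> \<nu> \<in> Ncone A \<beta> \<and> \<nu> \<noteq> (\<lambda>_. 0)
     \<and> support_fn X (- lin_comb A \<nu>) < \<infinity>
     \<and> \<not> (\<exists>\<nu>1 \<nu>2 t. \<nu>1 \<in> Ncone A \<beta> \<and> \<nu>2 \<in> Ncone A \<beta> \<and> \<not> proportional \<nu>1 \<nu>2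
             \<and> t \<in> {0<..<1} \<and> \<nu> = seg_pt \<nu>1 \<nu>2 t \<and> affine_on_seg X A \<nu>1 \<nu>2)"

definition X_circuit :: "'a::euclidean_space set \<Rightarrow> 'a set \<Rightarrow> ('a \<Rightarrow> real) \<Rightarrow> bool" where
  "X_circuit X A \<nu> \<longleftrightarrow> (\<exists>\<beta>\<in>A. X_circuit_at X A \<beta> \<nu>)"

definition normalized_X_circuit :: "'a::euclidean_space set \<Rightarrow> 'a set \<Rightarrow> ('a \<Rightarrow> real) \<Rightarrow> bool" where
  "normalized_X_circuit X A \<nu> \<longleftrightarrow> X_circuit X A \<nu> \<and> (\<forall>\<alpha>\<in>A. \<nu> \<alpha> < 0 \<longrightarrow> \<nu> \<alpha> = -1)"

end

theory Submission imports Defs begin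

definition LL :: "real set \<Rightarrow> (real \<Rightarrow> real) \<Rightarrow> real" where
  "LL A \<nu> = (\<Sum>a\<in>A. \<nu> a * a)"

lemma supp_fn: "support_fn {x::real. x \<ge> 0} y = (if y \<le> 0 then 0 else \<infinity>)"
proof (cases "y \<le> 0")
  case True
  have "support_fn {x::real. x \<ge> 0} y = 0"
    unfolding support_fn_def
  proof (rule antisym)
    show "(SUP x\<in>{x::real. x \<ge> 0}. ereal (inner y x)) \<le> 0"
      by (rule SUP_least) (use True in \<open>auto simp: mult_nonpos_nonneg\<close>)
    show "0 \<le> (SUP x\<in>{x::real. x \<ge> 0}. ereal (inner y x))"
      using SUP_upper[of "0::real" "{x::real. x \<ge> 0}" "\<lambda>x. ereal (inner y x)"] by (simp add: zero_ereal_def)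
  qed
  then show ?thesis using True by simp
next
  case False
  let ?S = "(SUP x\<in>{x::real. x \<ge> 0}. ereal (inner y x))"
  have up: "ereal r \<le> ?S" for r
  proof -
    have "(\<bar>r\<bar>+1)/y \<in> {x::real. x \<ge> 0}" using False by auto
    then have "ereal (inner y ((\<bar>r\<bar>+1)/y)) \<le> ?S" by (rule SUP_upper)
    moreover have "inner y ((\<bar>r\<bar>+1)/y) = \<bar>r\<bar>+1" using False by simp
    ultimately show ?thesis by (smt (verit) ereal_less_eq(3) order_trans)
  qed
  have "?S = \<infinity>"
  proof (cases ?S)
    case (real r) then show ?thesis using up[of "r+1"] by simp
  next
    case PInf then show ?thesis by simp
  next
    case MInf then show ?thesis using up[of 0] by simp
  qed
  then show ?thesis using False by (simp add: support_fn_def)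
qed

lemma lin_comb_real: "lin_comb A \<nu> = LL A \<nu>"
  by (simp add: lin_comb_def LL_def)

lemma fin_iff: "support_fn {x::real. x \<ge> 0} (- lin_comb A \<nu>) < \<infinity> \<longleftrightarrow> LL A \<nu> \<ge> 0"
  by (simp add: supp_fn lin_comb_real)

lemma LL_seg: "LL A (seg_pt \<nu>1 \<nu>2 t) = (1-t)*LL A \<nu>1 + t * LL A \<nu>2"
  unfolding LL_def seg_pt_def sum_distrib_left sum.distrib[symmetric]
  by (rule sum.cong) (auto simp: algebra_simps)

lemma aff_iff: "affine_on_seg {x::real. x \<ge> 0} A \<nu>1 \<nu>2 \<longleftrightarrow> LL A \<nu>1 \<ge> 0 \<and> LL A \<nu>2 \<ge> 0"
proof
  assume "affine_on_seg {x::real. x \<ge> 0} A \<nu>1 \<nu>2"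
  then obtain a b where h: "\<forall>t\<in>{0..1}. support_fn {x::real. x \<ge> 0} (- lin_comb A (seg_pt \<nu>1 \<nu>2 t)) = ereal (a + b * t)"
    unfolding affine_on_seg_def by blast
  have "seg_pt \<nu>1 \<nu>2 0 = \<nu>1" "seg_pt \<nu>1 \<nu>2 1 = \<nu>2" by (auto simp: seg_pt_def)
  then show "LL A \<nu>1 \<ge> 0 \<and> LL A \<nu>2 \<ge> 0"
    using h[rule_format, of 0] h[rule_format, of 1] by (auto simp: supp_fn lin_comb_real split: if_splits)
next
  assume h: "LL A \<nu>1 \<ge> 0 \<and> LL A \<nu>2 \<ge> 0"
  show "affine_on_seg {x::real. x \<ge> 0} A \<nu>1 \<nu>2"
    unfolding affine_on_seg_def
  proof (intro exI ballI)
    fix t :: real assume "t \<in> {0..1}"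
    then have "LL A (seg_pt \<nu>1 \<nu>2 t) \<ge> 0" using h by (simp add: LL_seg)
    then show "support_fn {x::real. x \<ge> 0} (- lin_comb A (seg_pt \<nu>1 \<nu>2 t)) = ereal (0 + 0 * t)"
      by (simp add: supp_fn lin_comb_real zero_ereal_def)
  qed
qed


definition EXT :: "real set \<Rightarrow> real \<Rightarrow> (real \<Rightarrow> real) \<Rightarrow> bool" where
  "EXT A \<beta> \<nu> \<longleftrightarrow> (\<forall>\<nu>1 \<nu>2 t. \<nu>1 \<in> Ncone A \<beta> \<longrightarrow> \<nu>2 \<in> Ncone A \<beta> \<longrightarrow> t \<in> {0<..<1} \<longrightarrow>
      \<nu> = seg_pt \<nu>1 \<nu>2 t \<longrightarrow> LL A \<nu>1 \<ge> 0 \<longrightarrow> LL A \<nu>2 \<ge> 0 \<longrightarrow> proportional \<nu>1 \<nu>2)"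

lemma circ_at_iff: "X_circuit_at {x::real. x \<ge> 0} A \<beta> \<nu> \<longleftrightarrow>
   \<nu> \<in> Ncone A \<beta> \<and> \<nu> \<noteq> (\<lambda>_. 0) \<and> LL A \<nu> \<ge> 0 \<and> EXT A \<beta> \<nu>"
  unfolding X_circuit_at_def fin_iff aff_iff EXT_def by blast

lemma prop_mult: "\<nu>1 = (\<lambda>a. s1 * V a) \<Longrightarrow> \<nu>2 = (\<lambda>a. s2 * V a) \<Longrightarrow> proportional \<nu>1 \<nu>2"
proof (cases "s1 = 0")
  case True
  assume "\<nu>1 = (\<lambda>a. s1 * V a)"
  then have "\<nu>1 = (\<lambda>a. 0 * \<nu>2 a)" using True by simp
  then show ?thesis unfolding proportional_def by blast
next
  case False
  assume h: "\<nu>1 = (\<lambda>a. s1 * V a)" "\<nu>2 = (\<lambda>a. s2 * V a)"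
  then have "\<nu>2 = (\<lambda>a. (s2/s1) * \<nu>1 a)" using False by auto
  then show ?thesis unfolding proportional_def by blast
qed

lemma zero_split: "t \<in> {0<..<1} \<Longrightarrow> (x::real) \<ge> 0 \<Longrightarrow> y \<ge> 0 \<Longrightarrow> (1-t)*x + t*y = 0 \<Longrightarrow> x = 0 \<and> y = 0"
  by (smt (verit, best) greaterThanLessThan_iff mult_nonneg_nonneg mult_pos_pos)

lemma forced_zero:
  assumes "\<nu> = seg_pt \<nu>1 \<nu>2 t" "t \<in> {0<..<1}" "\<nu>1 \<in> Ncone A \<beta>" "\<nu>2 \<in> Ncone A \<beta>"
    "a \<in> A" "a \<noteq> \<beta>" "\<nu> a = 0"
  shows "\<nu>1 a = 0 \<and> \<nu>2 a = 0"
  using assms zero_split[of t "\<nu>1 a" "\<nu>2 a"] by (auto simp: Ncone_def seg_pt_def)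

lemma sum_two: "finite A \<Longrightarrow> x \<in> A \<Longrightarrow> y \<in> A \<Longrightarrow> x \<noteq> y \<Longrightarrow> (\<forall>a\<in>A. a \<noteq> x \<longrightarrow> a \<noteq> y \<longrightarrow> f a = 0)
   \<Longrightarrow> sum f A = f x + f y"
proof -
  assume h: "finite A" "x \<in> A" "y \<in> A" "x \<noteq> y" "\<forall>a\<in>A. a \<noteq> x \<longrightarrow> a \<noteq> y \<longrightarrow> f a = 0"
  have "sum f A = sum f {x,y}" by (rule sum.mono_neutral_right) (use h in auto)
  then show ?thesis using h by simp
qed

lemma sum_three: "finite A \<Longrightarrow> x \<in> A \<Longrightarrow> y \<in> A \<Longrightarrow> z \<in> A \<Longrightarrow> x \<noteq> y \<Longrightarrow> x \<noteq> z \<Longrightarrow> y \<noteq> z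
   \<Longrightarrow> (\<forall>a\<in>A. a \<noteq> x \<longrightarrow> a \<noteq> y \<longrightarrow> a \<noteq> z \<longrightarrow> f a = 0)
   \<Longrightarrow> sum f A = f x + f y + f z"
proof -
  assume h: "finite A" "x \<in> A" "y \<in> A" "z \<in> A" "x \<noteq> y" "x \<noteq> z" "y \<noteq> z"
    "\<forall>a\<in>A. a \<noteq> x \<longrightarrow> a \<noteq> y \<longrightarrow> a \<noteq> z \<longrightarrow> f a = 0"
  have "sum f A = sum f {x,y,z}" by (rule sum.mono_neutral_right) (use h in auto)
  then show ?thesis using h by (simp add: add.assoc)
qed

lemma perturb_contra:
  assumes E: "EXT A \<beta> \<nu>" and nu: "\<nu> \<in> Ncone A \<beta>"
    and wout: "\<forall>a. a \<notin> A \<longrightarrow> w a = 0" and wsum: "sum w A = 0"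
    and pos: "\<forall>a\<in>A. a \<noteq> \<beta> \<longrightarrow> \<nu> a + \<epsilon> * w a \<ge> 0 \<and> \<nu> a - \<epsilon> * w a \<ge> 0"
    and L1: "LL A \<nu> + \<epsilon> * LL A w \<ge> 0" and L2: "LL A \<nu> - \<epsilon> * LL A w \<ge> 0"
    and e: "\<epsilon> \<noteq> 0" and x: "\<nu> x \<noteq> 0" "w x = 0" and y: "w y \<noteq> 0"
  shows False
proof -
  define \<nu>1 where "\<nu>1 = (\<lambda>a. \<nu> a + \<epsilon> * w a)"
  define \<nu>2 where "\<nu>2 = (\<lambda>a. \<nu> a - \<epsilon> * w a)"
  have s1: "sum \<nu>1 A = sum \<nu> A + \<epsilon> * sum w A"
    unfolding \<nu>1_def by (simp add: sum.distrib sum_distrib_left)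
  have s2: "sum \<nu>2 A = sum \<nu> A - \<epsilon> * sum w A"
    unfolding \<nu>2_def by (simp add: sum_subtractf sum_distrib_left)
  have m1: "\<nu>1 \<in> Ncone A \<beta>" using nu wout pos s1 wsum unfolding Ncone_def \<nu>1_def by auto
  have m2: "\<nu>2 \<in> Ncone A \<beta>" using nu wout pos s2 wsum unfolding Ncone_def \<nu>2_def by auto
  have l1: "LL A \<nu>1 = LL A \<nu> + \<epsilon> * LL A w"
    unfolding \<nu>1_def LL_def by (simp add: sum.distrib sum_distrib_left algebra_simps)
  have l2: "LL A \<nu>2 = LL A \<nu> - \<epsilon> * LL A w"
    unfolding \<nu>2_def LL_def by (simp add: sum_subtractf sum_distrib_left algebra_simps)
  have seg: "\<nu> = seg_pt \<nu>1 \<nu>2 (1/2)" unfolding seg_pt_def \<nu>1_def \<nu>2_def by (auto simp: algebra_simps)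
  have "proportional \<nu>1 \<nu>2"
    apply (rule E[unfolded EXT_def, rule_format, OF m1 m2 _ seg])
    using L1 L2 l1 l2 by auto
  then show False
  proof (unfold proportional_def, elim disjE exE)
    fix c assume h: "\<nu>1 = (\<lambda>a. c * \<nu>2 a)"
    have "\<nu>1 x = c * \<nu>2 x" "\<nu>1 y = c * \<nu>2 y" using h by auto
    then show False using x y e unfolding \<nu>1_def \<nu>2_def
      by (smt (verit, ccfv_SIG) mult_cancel_right1 no_zero_divisors)
  next
    fix c assume h: "\<nu>2 = (\<lambda>a. c * \<nu>1 a)"
    have "\<nu>2 x = c * \<nu>1 x" "\<nu>2 y = c * \<nu>1 y" using h by auto
    then show False using x y e unfolding \<nu>1_def \<nu>2_def
      by (smt (verit, ccfv_SIG) mult_cancel_right1 no_zero_divisors)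
  qed
qed


definition D1 :: "real \<Rightarrow> real \<Rightarrow> real \<Rightarrow> real" where
  "D1 b c = (\<lambda>a. if a = c then 1 else if a = b then -1 else 0)"

definition D2 :: "real \<Rightarrow> real \<Rightarrow> real \<Rightarrow> real \<Rightarrow> real" where
  "D2 p b c = (\<lambda>a. if a = c then (b-p)/(c-p) else if a = p then (c-b)/(c-p) else if a = b then -1 else 0)"

lemma D1_circ:
  assumes fin: "finite A" and b: "b \<in> A" and c: "c \<in> A" and bc: "b < c"
  shows "normalized_X_circuit {x::real. x \<ge> 0} A (D1 b c)"
proof -
  have sumD: "sum (D1 b c) A = 0"
    by (subst sum_two[OF fin c b]) (use bc in \<open>auto simp: D1_def\<close>)
  have mem: "D1 b c \<in> Ncone A b" using sumD b c unfolding Ncone_def D1_def by auto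
  have nz: "D1 b c \<noteq> (\<lambda>_. 0)"
  proof
    assume "D1 b c = (\<lambda>_. 0)"
    then have "D1 b c c = 0" by simp
    then show False by (simp add: D1_def)
  qed
  have L: "LL A (D1 b c) = c - b" unfolding LL_def
    by (subst sum_two[OF fin c b]) (use bc in \<open>auto simp: D1_def\<close>)
  have E: "EXT A b (D1 b c)"
    unfolding EXT_def
  proof (intro allI impI)
    fix \<nu>1 \<nu>2 t assume m1: "\<nu>1 \<in> Ncone A b" and m2: "\<nu>2 \<in> Ncone A b" and t: "t \<in> {0<..<1}"
      and seg: "D1 b c = seg_pt \<nu>1 \<nu>2 t"
    have z: "\<nu>1 a = 0 \<and> \<nu>2 a = 0" if "a \<in> A" "a \<noteq> b" "a \<noteq> c" for a
      using forced_zero[OF seg t m1 m2 that(1,2)] that by (simp add: D1_def)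
    have o1: "\<nu>1 a = 0" if "a \<notin> A" for a using m1 that by (simp add: Ncone_def)
    have o2: "\<nu>2 a = 0" if "a \<notin> A" for a using m2 that by (simp add: Ncone_def)
    have s1: "\<nu>1 c + \<nu>1 b = 0" using m1 sum_two[OF fin c b, of \<nu>1] z bc by (auto simp: Ncone_def)
    have s2: "\<nu>2 c + \<nu>2 b = 0" using m2 sum_two[OF fin c b, of \<nu>2] z bc by (auto simp: Ncone_def)
    have "\<nu>1 = (\<lambda>a. \<nu>1 c * D1 b c a)"
    proof
      fix a show "\<nu>1 a = \<nu>1 c * D1 b c a"
        using z[of a] o1[of a] s1 bc by (cases "a \<in> A") (auto simp: D1_def)
    qed
    moreover have "\<nu>2 = (\<lambda>a. \<nu>2 c * D1 b c a)"
    proof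
      fix a show "\<nu>2 a = \<nu>2 c * D1 b c a"
        using z[of a] o2[of a] s2 bc by (cases "a \<in> A") (auto simp: D1_def)
    qed
    ultimately show "proportional \<nu>1 \<nu>2" by (rule prop_mult)
  qed
  have "X_circuit_at {x::real. x \<ge> 0} A b (D1 b c)" using circ_at_iff mem nz L bc E by simp
  moreover have "\<forall>a\<in>A. D1 b c a < 0 \<longrightarrow> D1 b c a = -1" by (simp add: D1_def)
  ultimately show ?thesis unfolding normalized_X_circuit_def X_circuit_def using b by blast
qed

lemma alg2:
  fixes p b c xc xp xb :: real
  assumes "p < b" "b < c" "xc + xp + xb = 0" "xc*c + xp*p + xb*b = 0"
  shows "xc = -xb * ((b-p)/(c-p)) \<and> xp = -xb*((c-b)/(c-p))"
proof -
  have cp: "c - p \<noteq> 0" using assms by simp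
  have "xc * (c-p) = -xb*(b-p)" using assms(3,4) by algebra
  moreover have "xp * (c-p) = -xb*(c-b)" using assms(3,4) by algebra
  ultimately show ?thesis using cp by (simp add: field_simps)
qed

lemma D2_circ:
  assumes fin: "finite A" and p: "p \<in> A" and b: "b \<in> A" and c: "c \<in> A" and pb: "p < b" and bc: "b < c"
  shows "normalized_X_circuit {x::real. x \<ge> 0} A (D2 p b c)"
proof -
  have cp: "c - p > 0" using pb bc by simp
  have h1: "(b-p)/(c-p) * (c-p) = b-p" and h2: "(c-b)/(c-p) * (c-p) = c-b" using cp by auto
  have "((b-p)/(c-p) + (c-b)/(c-p) + -1) * (c-p) = 0" using h1 h2 by algebra
  then have u: "(b-p)/(c-p) + (c-b)/(c-p) + -1 = 0" using cp by simp
  have "((b-p)/(c-p) * c + (c-b)/(c-p) * p + -1 * b) * (c-p) = 0" using h1 h2 by algebra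
  then have u2: "(b-p)/(c-p) * c + (c-b)/(c-p) * p + -1 * b = 0" using cp by simp
  have sumD: "sum (D2 p b c) A = 0"
    by (subst sum_three[OF fin c p b]) (use pb bc u in \<open>auto simp: D2_def\<close>)
  have nn: "(b-p)/(c-p) \<ge> 0" "(c-b)/(c-p) \<ge> 0" using pb bc cp by auto
  have mem: "D2 p b c \<in> Ncone A b" using sumD b c p nn unfolding Ncone_def D2_def by auto
  have nz: "D2 p b c \<noteq> (\<lambda>_. 0)"
  proof
    assume "D2 p b c = (\<lambda>_. 0)"
    then have "D2 p b c b = 0" by simp
    then show False using pb bc by (simp add: D2_def)
  qed
  have L: "LL A (D2 p b c) = 0" unfolding LL_def
    by (subst sum_three[OF fin c p b]) (use pb bc u2 in \<open>auto simp: D2_def\<close>)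
  have E: "EXT A b (D2 p b c)"
    unfolding EXT_def
  proof (intro allI impI)
    fix \<nu>1 \<nu>2 t assume m1: "\<nu>1 \<in> Ncone A b" and m2: "\<nu>2 \<in> Ncone A b" and t: "t \<in> {0<..<1}"
      and seg: "D2 p b c = seg_pt \<nu>1 \<nu>2 t" and L1: "LL A \<nu>1 \<ge> 0" and L2: "LL A \<nu>2 \<ge> 0"
    have z: "\<nu>1 a = 0 \<and> \<nu>2 a = 0" if "a \<in> A" "a \<noteq> b" "a \<noteq> c" "a \<noteq> p" for a
      using forced_zero[OF seg t m1 m2 that(1,2)] that by (simp add: D2_def)
    have o1: "\<nu>1 a = 0" if "a \<notin> A" for a using m1 that by (simp add: Ncone_def)
    have o2: "\<nu>2 a = 0" if "a \<notin> A" for a using m2 that by (simp add: Ncone_def)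
    have s1: "\<nu>1 c + \<nu>1 p + \<nu>1 b = 0" using m1 sum_three[OF fin c p b, of \<nu>1] z pb bc by (auto simp: Ncone_def)
    have s2: "\<nu>2 c + \<nu>2 p + \<nu>2 b = 0" using m2 sum_three[OF fin c p b, of \<nu>2] z pb bc by (auto simp: Ncone_def)
    have l1: "LL A \<nu>1 = \<nu>1 c * c + \<nu>1 p * p + \<nu>1 b * b" unfolding LL_def
      by (rule sum_three[OF fin c p b]) (use z pb bc in auto)
    have l2: "LL A \<nu>2 = \<nu>2 c * c + \<nu>2 p * p + \<nu>2 b * b" unfolding LL_def
      by (rule sum_three[OF fin c p b]) (use z pb bc in auto)
    have "(1-t) * LL A \<nu>1 + t * LL A \<nu>2 = 0" using L seg LL_seg by metis
    then have LL0: "LL A \<nu>1 = 0 \<and> LL A \<nu>2 = 0" using zero_split[OF t L1 L2] by simp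
    have a1: "\<nu>1 c = -\<nu>1 b * ((b-p)/(c-p)) \<and> \<nu>1 p = -\<nu>1 b*((c-b)/(c-p))"
      by (rule alg2[OF pb bc s1]) (use LL0 l1 in simp)
    have a2: "\<nu>2 c = -\<nu>2 b * ((b-p)/(c-p)) \<and> \<nu>2 p = -\<nu>2 b*((c-b)/(c-p))"
      by (rule alg2[OF pb bc s2]) (use LL0 l2 in simp)
    have "\<nu>1 = (\<lambda>a. (-\<nu>1 b) * D2 p b c a)"
    proof
      fix a show "\<nu>1 a = (-\<nu>1 b) * D2 p b c a"
        using z[of a] o1[of a] a1 pb bc by (cases "a \<in> A") (auto simp: D2_def)
    qed
    moreover have "\<nu>2 = (\<lambda>a. (-\<nu>2 b) * D2 p b c a)"
    proof
      fix a show "\<nu>2 a = (-\<nu>2 b) * D2 p b c a"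
        using z[of a] o2[of a] a2 pb bc by (cases "a \<in> A") (auto simp: D2_def)
    qed
    ultimately show "proportional \<nu>1 \<nu>2" by (rule prop_mult)
  qed
  have "X_circuit_at {x::real. x \<ge> 0} A b (D2 p b c)" using circ_at_iff mem nz L E by simp
  moreover have "\<forall>a\<in>A. D2 p b c a < 0 \<longrightarrow> D2 p b c a = -1" using nn by (simp add: D2_def)
  ultimately show ?thesis unfolding normalized_X_circuit_def X_circuit_def using b by blast
qed


lemma D2_from:
  assumes pb: "p < b" and bc: "b < c" and out: "\<forall>a. a \<noteq> p \<longrightarrow> a \<noteq> b \<longrightarrow> a \<noteq> c \<longrightarrow> \<nu> a = 0"
    and nb: "\<nu> b = -1" and s: "\<nu> p + \<nu> c = 1" and l: "\<nu> p * p + \<nu> c * c = b"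
  shows "\<nu> = D2 p b c"
proof -
  have cp: "c - p \<noteq> 0" using pb bc by simp
  have "\<nu> c * (c-p) = b - p" using s l by algebra
  then have ec: "\<nu> c = (b-p)/(c-p)" using cp by (simp add: field_simps)
  have "\<nu> p * (c-p) = c - b" using s l by algebra
  then have ep: "\<nu> p = (c-b)/(c-p)" using cp by (simp add: field_simps)
  show ?thesis
  proof
    fix a show "\<nu> a = D2 p b c a"
      using out ec ep nb pb bc by (auto simp: D2_def)
  qed
qed

lemma shape:
  assumes fin: "finite A" and \<beta>: "\<beta> \<in> A" and nu: "\<nu> \<in> Ncone A \<beta>" and nz: "\<nu> \<noteq> (\<lambda>_. 0)"
    and L: "LL A \<nu> \<ge> 0" and E: "EXT A \<beta> \<nu>" and norm: "\<forall>a\<in>A. \<nu> a < 0 \<longrightarrow> \<nu> a = -1"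
  shows "(\<exists>b c. b \<in> A \<and> c \<in> A \<and> b < c \<and> \<nu> = D1 b c)
       \<or> (\<exists>p b c. p \<in> A \<and> b \<in> A \<and> c \<in> A \<and> p < b \<and> b < c \<and> \<nu> = D2 p b c)"
proof -
  have out: "\<forall>a. a \<notin> A \<longrightarrow> \<nu> a = 0" and nn: "\<forall>a\<in>A. a \<noteq> \<beta> \<longrightarrow> \<nu> a \<ge> 0" and s0: "sum \<nu> A = 0"
    using nu by (auto simp: Ncone_def)
  have srem: "sum \<nu> A = \<nu> \<beta> + sum \<nu> (A - {\<beta>})" using fin \<beta> by (simp add: sum.remove)
  have snn: "sum \<nu> (A - {\<beta>}) \<ge> 0" using nn by (auto intro: sum_nonneg)
  have "\<nu> \<beta> < 0"
  proof (rule ccontr)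
    assume "\<not> \<nu> \<beta> < 0"
    then have nb0: "\<nu> \<beta> = 0" and "sum \<nu> (A - {\<beta>}) = 0" using srem s0 snn by linarith+
    then have z: "\<forall>a\<in>A - {\<beta>}. \<nu> a = 0" using sum_nonneg_eq_0_iff[of "A - {\<beta>}" \<nu>] fin nn by auto
    have "\<nu> a = 0" for a
      using z nb0 out by (cases "a \<in> A"; cases "a = \<beta>") auto
    then have "\<nu> = (\<lambda>_. 0)" by (intro ext)
    with nz show False by simp
  qed
  then have nb: "\<nu> \<beta> = -1" using norm \<beta> by auto
  have s1: "sum \<nu> (A - {\<beta>}) = 1" using srem s0 nb by linarith
  have "\<exists>c\<in>A - {\<beta>}. \<nu> c > 0"
  proof (rule ccontr)
    assume "\<not> (\<exists>c\<in>A - {\<beta>}. \<nu> c > 0)"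
    then have "\<forall>a\<in>A - {\<beta>}. \<nu> a \<le> 0" by (meson not_le)
    then have "sum \<nu> (A - {\<beta>}) \<le> 0" using sum_nonpos[of "A - {\<beta>}" \<nu>] by blast
    then show False using s1 by simp
  qed
  then obtain c where c: "c \<in> A" "c \<noteq> \<beta>" "\<nu> c > 0" by auto
  have zeq: "\<nu> a = 0" if "a \<in> A" "a \<noteq> \<beta>" "\<not> \<nu> a > 0" for a using nn that by force
  have lin: "LL A w = 0" if "\<forall>a. w a = 0" for w unfolding LL_def using that by simp
  consider (three) d e where "d \<in> A" "e \<in> A" "d \<noteq> \<beta>" "e \<noteq> \<beta>" "d \<noteq> c" "e \<noteq> c" "d \<noteq> e" "\<nu> d > 0" "\<nu> e > 0"
    | (two) d where "d \<in> A" "d \<noteq> \<beta>" "d \<noteq> c" "\<nu> d > 0" "\<forall>a\<in>A. a \<noteq> \<beta> \<longrightarrow> a \<noteq> c \<longrightarrow> a \<noteq> d \<longrightarrow> \<nu> a = 0"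
    | (one) "\<forall>a\<in>A. a \<noteq> \<beta> \<longrightarrow> a \<noteq> c \<longrightarrow> \<nu> a = 0"
  proof (cases "\<exists>d\<in>A. d \<noteq> \<beta> \<and> d \<noteq> c \<and> \<nu> d > 0")
    case True
    then obtain d where d: "d \<in> A" "d \<noteq> \<beta>" "d \<noteq> c" "\<nu> d > 0" by blast
    show ?thesis
    proof (cases "\<exists>e\<in>A. e \<noteq> \<beta> \<and> e \<noteq> c \<and> e \<noteq> d \<and> \<nu> e > 0")
      case True
      then obtain e where e: "e \<in> A" "e \<noteq> \<beta>" "e \<noteq> c" "e \<noteq> d" "\<nu> e > 0" by blast
      show ?thesis using that(1)[of d e] d e by auto
    next
      case False
      then have "\<forall>a\<in>A. a \<noteq> \<beta> \<longrightarrow> a \<noteq> c \<longrightarrow> a \<noteq> d \<longrightarrow> \<nu> a = 0" using zeq by blast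
      then show ?thesis using that(2)[of d] d by blast
    qed
  next
    case False
    then have "\<forall>a\<in>A. a \<noteq> \<beta> \<longrightarrow> a \<noteq> c \<longrightarrow> \<nu> a = 0" using zeq by blast
    then show ?thesis using that(3) by blast
  qed
  then show ?thesis
  proof cases
    case three
    define gc where "gc = c - \<beta>"
    define gd where "gd = d - \<beta>"
    have gc0: "gc \<noteq> 0" and gd0: "gd \<noteq> 0" using c three by (auto simp: gc_def gd_def)
    define w where "w = (\<lambda>a. (if a = c then gd else 0) + (if a = d then -gc else 0) + (if a = \<beta> then gc - gd else 0))"
    have wout: "\<forall>a. a \<notin> A \<longrightarrow> w a = 0" using c three \<beta> by (auto simp: w_def)
    have wsum: "sum w A = 0"
      by (subst sum_three[OF fin c(1) three(1) \<beta>]) (use c three in \<open>auto simp: w_def\<close>)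
    have "LL A w = w c * c + w d * d + w \<beta> * \<beta>" unfolding LL_def
      by (rule sum_three[OF fin c(1) three(1) \<beta>]) (use c three in \<open>auto simp: w_def\<close>)
    also have "\<dots> = gd * c + (-gc) * d + (gc - gd) * \<beta>" using c three by (simp add: w_def)
    also have "\<dots> = 0" unfolding gc_def gd_def by algebra
    finally have wL: "LL A w = 0" .
    define M where "M = \<bar>gc\<bar> + \<bar>gd\<bar> + 1"
    define \<epsilon> where "\<epsilon> = min (\<nu> c) (\<nu> d) / M"
    have M0: "M > 0" by (simp add: M_def add_nonneg_pos)
    have e0: "\<epsilon> > 0" unfolding \<epsilon>_def using M0 c three by simp
    have eM: "\<epsilon> * M = min (\<nu> c) (\<nu> d)" unfolding \<epsilon>_def using M0 by simp
    have "\<epsilon> * \<bar>gd\<bar> \<le> \<epsilon> * M" using e0 by (intro mult_left_mono) (auto simp: M_def)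
    then have b1: "\<bar>\<epsilon> * gd\<bar> \<le> \<nu> c" using eM e0 by (simp add: abs_mult)
    have "\<epsilon> * \<bar>gc\<bar> \<le> \<epsilon> * M" using e0 by (intro mult_left_mono) (auto simp: M_def)
    then have b2: "\<bar>\<epsilon> * gc\<bar> \<le> \<nu> d" using eM e0 by (simp add: abs_mult)
    have pos: "\<forall>a\<in>A. a \<noteq> \<beta> \<longrightarrow> \<nu> a + \<epsilon> * w a \<ge> 0 \<and> \<nu> a - \<epsilon> * w a \<ge> 0"
    proof (intro ballI impI)
      fix a assume a: "a \<in> A" "a \<noteq> \<beta>"
      show "\<nu> a + \<epsilon> * w a \<ge> 0 \<and> \<nu> a - \<epsilon> * w a \<ge> 0"
      proof (cases "a = c")
        case True then show ?thesis using b1 three a by (auto simp: w_def abs_le_iff)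
      next
        case False
        show ?thesis
        proof (cases "a = d")
          case True then show ?thesis using b2 three a False by (auto simp: w_def abs_le_iff)
        next
          case False2: False
          then show ?thesis using nn a False by (auto simp: w_def)
        qed
      qed
    qed
    have "w e = 0" using three by (auto simp: w_def)
    moreover have "w c \<noteq> 0" using three c gd0 by (auto simp: w_def)
    moreover have "LL A \<nu> + \<epsilon> * LL A w \<ge> 0" "LL A \<nu> - \<epsilon> * LL A w \<ge> 0" using L wL by simp_all
    moreover have "\<epsilon> \<noteq> 0" "\<nu> e \<noteq> 0" using e0 three by auto
    ultimately have False
      using perturb_contra[OF E nu wout wsum pos] by blast
    then show ?thesis ..
  next
    case two
    show ?thesis
    proof (cases "LL A \<nu> > 0")
      case True
      define w where "w = (\<lambda>a. (if a = c then 1 else 0) + (if a = \<beta> then -1 else (0::real)))"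
      have wout: "\<forall>a. a \<notin> A \<longrightarrow> w a = 0" using c \<beta> by (auto simp: w_def)
      have wsum: "sum w A = 0"
        by (subst sum_two[OF fin c(1) \<beta>]) (use c in \<open>auto simp: w_def\<close>)
      have "LL A w = w c * c + w \<beta> * \<beta>" unfolding LL_def
        by (rule sum_two[OF fin c(1) \<beta>]) (use c in \<open>auto simp: w_def\<close>)
      then have wL: "LL A w = c - \<beta>" using c by (simp add: w_def)
      define \<epsilon> where "\<epsilon> = min (\<nu> c) (LL A \<nu> / (\<bar>c - \<beta>\<bar> + 1))"
      have M0: "\<bar>c - \<beta>\<bar> + 1 > 0" by (simp add: add_nonneg_pos)
      have e0: "\<epsilon> > 0" unfolding \<epsilon>_def using M0 c True by simp
      have ec: "\<epsilon> \<le> \<nu> c" unfolding \<epsilon>_def by simp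
      have "\<epsilon> \<le> LL A \<nu> / (\<bar>c - \<beta>\<bar> + 1)" unfolding \<epsilon>_def by simp
      then have "\<epsilon> * (\<bar>c - \<beta>\<bar> + 1) \<le> LL A \<nu> / (\<bar>c - \<beta>\<bar> + 1) * (\<bar>c - \<beta>\<bar> + 1)"
        using M0 by (intro mult_right_mono) auto
      also have "\<dots> = LL A \<nu>" using M0 by simp
      finally have "\<epsilon> * (\<bar>c - \<beta>\<bar> + 1) \<le> LL A \<nu>" .
      moreover have "\<epsilon> * (\<bar>c - \<beta>\<bar> + 1) = \<epsilon> * \<bar>c - \<beta>\<bar> + \<epsilon>" by (simp add: ring_distribs)
      moreover have "\<bar>\<epsilon> * (c - \<beta>)\<bar> = \<epsilon> * \<bar>c - \<beta>\<bar>" using e0 by (simp add: abs_mult)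
      ultimately have bL: "\<bar>\<epsilon> * (c - \<beta>)\<bar> \<le> LL A \<nu>" using e0 by linarith
      have pos: "\<forall>a\<in>A. a \<noteq> \<beta> \<longrightarrow> \<nu> a + \<epsilon> * w a \<ge> 0 \<and> \<nu> a - \<epsilon> * w a \<ge> 0"
        using nn ec e0 c by (auto simp: w_def)
      have "w d = 0" using two by (auto simp: w_def)
      moreover have "w c \<noteq> 0" using c by (auto simp: w_def)
      moreover have "LL A \<nu> + \<epsilon> * LL A w \<ge> 0" "LL A \<nu> - \<epsilon> * LL A w \<ge> 0"
        using bL wL by (auto simp: abs_le_iff)
      moreover have "\<epsilon> \<noteq> 0" "\<nu> d \<noteq> 0" using e0 two by auto
      ultimately have False
        using perturb_contra[OF E nu wout wsum pos] by blast
      then show ?thesis ..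
    next
      case False
      then have L0: "LL A \<nu> = 0" using L by simp
      have "sum \<nu> A = \<nu> \<beta> + \<nu> c + \<nu> d"
        by (rule sum_three[OF fin \<beta> c(1) two(1)]) (use c two in auto)
      then have sc: "\<nu> c + \<nu> d = 1" using s0 nb by simp
      have "LL A \<nu> = \<nu> \<beta> * \<beta> + \<nu> c * c + \<nu> d * d" unfolding LL_def
        by (rule sum_three[OF fin \<beta> c(1) two(1)]) (use c two in auto)
      then have lc: "\<nu> c * c + \<nu> d * d = \<beta>" using L0 nb by simp
      have outx: "\<nu> a = 0" if "a \<noteq> \<beta>" "a \<noteq> c" "a \<noteq> d" for a
        using two out that by (cases "a \<in> A") auto
      have cd: "(c < \<beta> \<and> \<beta> < d) \<or> (d < \<beta> \<and> \<beta> < c)"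
      proof (rule ccontr)
        assume h: "\<not> ?thesis"
        have "(c < \<beta> \<and> d < \<beta>) \<or> (\<beta> < c \<and> \<beta> < d)" using h c two by auto
        then show False
        proof
          assume "c < \<beta> \<and> d < \<beta>"
          then have "\<nu> c * c < \<nu> c * \<beta>" "\<nu> d * d < \<nu> d * \<beta>" using c two by auto
          moreover have "\<nu> c * \<beta> + \<nu> d * \<beta> = \<beta>" using sc by (simp add: distrib_right[symmetric])
          ultimately show False using lc by linarith
        next
          assume "\<beta> < c \<and> \<beta> < d"
          then have "\<nu> c * c > \<nu> c * \<beta>" "\<nu> d * d > \<nu> d * \<beta>" using c two by auto
          moreover have "\<nu> c * \<beta> + \<nu> d * \<beta> = \<beta>" using sc by (simp add: distrib_right[symmetric])
          ultimately show False using lc by linarith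
        qed
      qed
      then show ?thesis
      proof
        assume h: "c < \<beta> \<and> \<beta> < d"
        have "\<nu> = D2 c \<beta> d"
          by (rule D2_from) (use h outx nb sc lc in auto)
        then show ?thesis using h c two \<beta> by blast
      next
        assume h: "d < \<beta> \<and> \<beta> < c"
        have "\<nu> = D2 d \<beta> c"
          by (rule D2_from) (use h outx nb sc lc in \<open>auto simp: add.commute\<close>)
        then show ?thesis using h c two \<beta> by blast
      qed
    qed
  next
    case one
    have "sum \<nu> A = \<nu> c + \<nu> \<beta>"
      by (rule sum_two[OF fin c(1) \<beta>]) (use c one in auto)
    then have c1: "\<nu> c = 1" using s0 nb by simp
    have "LL A \<nu> = \<nu> c * c + \<nu> \<beta> * \<beta>" unfolding LL_def
      by (rule sum_two[OF fin c(1) \<beta>]) (use c one in auto)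
    then have "c - \<beta> \<ge> 0" using L c1 nb by simp
    then have bc: "\<beta> < c" using c by simp
    have "\<nu> = D1 \<beta> c"
    proof
      fix a show "\<nu> a = D1 \<beta> c a"
        using one out c1 nb bc by (cases "a \<in> A") (auto simp: D1_def)
    qed
    then show ?thesis using bc c \<beta> by blast
  qed
qed


lemma core:
  assumes fin: "finite A"
  shows "normalized_X_circuit {x::real. x \<ge> 0} A \<nu> \<longleftrightarrow>
    (\<exists>b c. b \<in> A \<and> c \<in> A \<and> b < c \<and> \<nu> = D1 b c)
       \<or> (\<exists>p b c. p \<in> A \<and> b \<in> A \<and> c \<in> A \<and> p < b \<and> b < c \<and> \<nu> = D2 p b c)"
proof
  assume "normalized_X_circuit {x::real. x \<ge> 0} A \<nu>"
  then obtain \<beta> where \<beta>: "\<beta> \<in> A" and ca: "X_circuit_at {x::real. x \<ge> 0} A \<beta> \<nu>"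
    and norm: "\<forall>a\<in>A. \<nu> a < 0 \<longrightarrow> \<nu> a = -1"
    unfolding normalized_X_circuit_def X_circuit_def by blast
  from ca have "\<nu> \<in> Ncone A \<beta>" "\<nu> \<noteq> (\<lambda>_. 0)" "LL A \<nu> \<ge> 0" "EXT A \<beta> \<nu>"
    unfolding circ_at_iff by auto
  then show "(\<exists>b c. b \<in> A \<and> c \<in> A \<and> b < c \<and> \<nu> = D1 b c)
       \<or> (\<exists>p b c. p \<in> A \<and> b \<in> A \<and> c \<in> A \<and> p < b \<and> b < c \<and> \<nu> = D2 p b c)"
    using shape[OF fin \<beta>] norm by blast
next
  assume "(\<exists>b c. b \<in> A \<and> c \<in> A \<and> b < c \<and> \<nu> = D1 b c)
       \<or> (\<exists>p b c. p \<in> A \<and> b \<in> A \<and> c \<in> A \<and> p < b \<and> b < c \<and> \<nu> = D2 p b c)"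
  then show "normalized_X_circuit {x::real. x \<ge> 0} A \<nu>"
    using D1_circ[OF fin] D2_circ[OF fin] by blast
qed

theorem mainTheorem19:
  fixes m :: nat and \<alpha> :: "nat \<Rightarrow> real" and lam :: "real \<Rightarrow> real"
  assumes mono: "strict_mono_on {1..m} \<alpha>"
  defines "A \<equiv> \<alpha> ` {1..m}" and "X \<equiv> {x::real. x \<ge> 0}"
  shows "normalized_X_circuit X A lam \<longleftrightarrow>
    (\<exists>j k. 1 \<le> j \<and> j < k \<and> k \<le> m \<and>
        lam = (\<lambda>a. if a = \<alpha> k then 1 else if a = \<alpha> j then -1 else 0))
    \<or> (\<exists>i j k. 1 \<le> i \<and> i < j \<and> j < k \<and> k \<le> m \<and>
        lam = (\<lambda>a. if a = \<alpha> k then (\<alpha> j - \<alpha> i) / (\<alpha> k - \<alpha> i)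
                 else if a = \<alpha> i then (\<alpha> k - \<alpha> j) / (\<alpha> k - \<alpha> i)
                 else if a = \<alpha> j then -1 else 0))"
proof -
  have fin: "finite A" unfolding A_def by simp
  have lt: "\<alpha> x < \<alpha> y \<longleftrightarrow> x < y" if "x \<in> {1..m}" "y \<in> {1..m}" for x y
    using strict_mono_on_less[OF mono that] .
  have "normalized_X_circuit X A lam \<longleftrightarrow>
    (\<exists>b c. b \<in> A \<and> c \<in> A \<and> b < c \<and> lam = D1 b c)
       \<or> (\<exists>p b c. p \<in> A \<and> b \<in> A \<and> c \<in> A \<and> p < b \<and> b < c \<and> lam = D2 p b c)"
    unfolding X_def by (rule core[OF fin])
  also have "(\<exists>b c. b \<in> A \<and> c \<in> A \<and> b < c \<and> lam = D1 b c) \<longleftrightarrow>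
    (\<exists>j k. 1 \<le> j \<and> j < k \<and> k \<le> m \<and>
        lam = (\<lambda>a. if a = \<alpha> k then 1 else if a = \<alpha> j then -1 else 0))"
  proof
    assume "\<exists>b c. b \<in> A \<and> c \<in> A \<and> b < c \<and> lam = D1 b c"
    then obtain j k where jk: "j \<in> {1..m}" "k \<in> {1..m}" "\<alpha> j < \<alpha> k" "lam = D1 (\<alpha> j) (\<alpha> k)"
      unfolding A_def by blast
    then have "j < k" using lt by blast
    then show "\<exists>j k. 1 \<le> j \<and> j < k \<and> k \<le> m \<and>
        lam = (\<lambda>a. if a = \<alpha> k then 1 else if a = \<alpha> j then -1 else 0)"
      using jk by (auto simp: D1_def)
  next
    assume "\<exists>j k. 1 \<le> j \<and> j < k \<and> k \<le> m \<and>
        lam = (\<lambda>a. if a = \<alpha> k then 1 else if a = \<alpha> j then -1 else 0)"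
    then obtain j k where jk: "1 \<le> j" "j < k" "k \<le> m"
        "lam = (\<lambda>a. if a = \<alpha> k then 1 else if a = \<alpha> j then -1 else 0)" by blast
    then have "\<alpha> j < \<alpha> k" using lt by auto
    moreover have "\<alpha> j \<in> A" "\<alpha> k \<in> A" using jk unfolding A_def by auto
    ultimately show "\<exists>b c. b \<in> A \<and> c \<in> A \<and> b < c \<and> lam = D1 b c"
      using jk by (auto simp: D1_def)
  qed
  also have "(\<exists>p b c. p \<in> A \<and> b \<in> A \<and> c \<in> A \<and> p < b \<and> b < c \<and> lam = D2 p b c) \<longleftrightarrow>
    (\<exists>i j k. 1 \<le> i \<and> i < j \<and> j < k \<and> k \<le> m \<and>
        lam = (\<lambda>a. if a = \<alpha> k then (\<alpha> j - \<alpha> i) / (\<alpha> k - \<alpha> i)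
                 else if a = \<alpha> i then (\<alpha> k - \<alpha> j) / (\<alpha> k - \<alpha> i)
                 else if a = \<alpha> j then -1 else 0))"
  proof
    assume "\<exists>p b c. p \<in> A \<and> b \<in> A \<and> c \<in> A \<and> p < b \<and> b < c \<and> lam = D2 p b c"
    then obtain i j k where ijk: "i \<in> {1..m}" "j \<in> {1..m}" "k \<in> {1..m}" "\<alpha> i < \<alpha> j" "\<alpha> j < \<alpha> k"
        "lam = D2 (\<alpha> i) (\<alpha> j) (\<alpha> k)"
      unfolding A_def by blast
    then have "i < j" "j < k" using lt by blast+
    then show "\<exists>i j k. 1 \<le> i \<and> i < j \<and> j < k \<and> k \<le> m \<and>
        lam = (\<lambda>a. if a = \<alpha> k then (\<alpha> j - \<alpha> i) / (\<alpha> k - \<alpha> i)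
                 else if a = \<alpha> i then (\<alpha> k - \<alpha> j) / (\<alpha> k - \<alpha> i)
                 else if a = \<alpha> j then -1 else 0)"
      using ijk by (auto simp: D2_def)
  next
    assume "\<exists>i j k. 1 \<le> i \<and> i < j \<and> j < k \<and> k \<le> m \<and>
        lam = (\<lambda>a. if a = \<alpha> k then (\<alpha> j - \<alpha> i) / (\<alpha> k - \<alpha> i)
                 else if a = \<alpha> i then (\<alpha> k - \<alpha> j) / (\<alpha> k - \<alpha> i)
                 else if a = \<alpha> j then -1 else 0)"
    then obtain i j k where ijk: "1 \<le> i" "i < j" "j < k" "k \<le> m"
        "lam = (\<lambda>a. if a = \<alpha> k then (\<alpha> j - \<alpha> i) / (\<alpha> k - \<alpha> i)
                 else if a = \<alpha> i then (\<alpha> k - \<alpha> j) / (\<alpha> k - \<alpha> i)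
                 else if a = \<alpha> j then -1 else 0)" by blast
    then have "\<alpha> i < \<alpha> j" "\<alpha> j < \<alpha> k" using lt by auto
    moreover have "\<alpha> i \<in> A" "\<alpha> j \<in> A" "\<alpha> k \<in> A" using ijk unfolding A_def by auto
    ultimately show "\<exists>p b c. p \<in> A \<and> b \<in> A \<and> c \<in> A \<and> p < b \<and> b < c \<and> lam = D2 p b c"
      using ijk unfolding D2_def by blast
  qed
  finally show ?thesis .
qed

end
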